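(* Let \[P_e(x,y)=\frac{y(1+y^2)}{(1-y)(1-xy+y^2)(1+xy+y^2)},\qquad P_o(x,y)=\frac{xy^2}{(1-y)(1-xy+y^2)(1+xy+y^2)},\] so that $\frac{y}{(1-y)(1-xy+y^2)}=P_e(x,y)+P_o(x,y)$ with $P_e$ even and $P_o$ odd as functions of $x$. Then, as formal power series in $y$, \[P_e(x,y)=y(1+y)\sum_{n=0}^\infty U_n\!\Big(\frac x2\Big)^2y^{2n},\qquad P_o(x,y)=(1+y)\sum_{n=1}^\infty U_n\!\Big(\frac x2\Big)U_{n-1}\!\Big(\frac x2\Big)y^{2n},\] where $U_n$ denotes the Chebyshev polynomial of the second kind.
   Context: The Chebyshev polynomials of the second kind $U_n(x)$, $n\ge0$, are defined by $\frac{1}{1-2xz+z^2}=\sum_{n\ge0}U_n(x)z^n$. *)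

theory Defs
  imports "HOL-Computational_Algebra.Formal_Power_Series"
begin

definition chebU :: "nat \<Rightarrow> 'a::field \<Rightarrow> 'a" where
  "chebU n x = fps_nth (inverse (1 - fps_const (2 * x) * fps_X + fps_X ^ 2)) n"

definition P_e :: "'a::field \<Rightarrow> 'a fps" where
  "P_e x = fps_X * (1 + fps_X ^ 2) /
     ((1 - fps_X) * (1 - fps_const x * fps_X + fps_X ^ 2) * (1 + fps_const x * fps_X + fps_X ^ 2))"

definition P_o :: "'a::field \<Rightarrow> 'a fps" where
  "P_o x = fps_const x * fps_X ^ 2 /
     ((1 - fps_X) * (1 - fps_const x * fps_X + fps_X ^ 2) * (1 + fps_const x * fps_X + fps_X ^ 2))"

end

theory Submission
  imports Defs
begin

unbundle fps_syntax

lemma cheb_rec: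
  fixes y :: "'a::field"
  shows "chebU 0 y = 1" "chebU 1 y = 2*y" "chebU (Suc (Suc n)) y = 2*y*chebU (Suc n) y - chebU n y"
proof -
  define D :: "'a fps" where "D = 1 - fps_const (2 * y) * fps_X + fps_X ^ 2"
  define G where "G = inverse D"
  have D0: "D $ 0 \<noteq> 0" by (simp add: D_def)
  have GD: "G * D = 1" unfolding G_def using D0 by (rule inverse_mult_eq_1)
  have c: "chebU n y = G $ n" for n by (simp add: chebU_def G_def D_def)
  have e: "G * D = G - fps_const (2*y) * (fps_X * G) + fps_X^2 * G"
    by (simp add: D_def algebra_simps)
  have nth: "(G * D) $ k = G $ k - (2*y) * (if k = 0 then 0 else G $ (k - 1)) + (if k < 2 then 0 else G $ (k-2))" for k
    unfolding e by (simp add: fps_X_power_mult_nth del: power_Suc)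
  have "(G*D) $ 0 = 1" using GD by simp
  then show "chebU 0 y = 1" using nth[of 0] c by simp
  have "(G*D) $ 1 = 0" using GD by simp
  then show "chebU 1 y = 2*y" using nth[of 1] c[of 0] c[of 1] \<open>(G*D) $ 0 = 1\<close> nth[of 0] by simp
  have "(G*D) $ Suc (Suc n) = 0" using GD by simp
  then show "chebU (Suc (Suc n)) y = 2*y*chebU (Suc n) y - chebU n y"
    using nth[of "Suc (Suc n)"] c by (simp add: algebra_simps)
qed

lemma key:
  fixes c :: "'a::field" and s t :: "nat \<Rightarrow> 'a"
  assumes "\<And>m. s m + c*(if 1\<le>m then s(m-1) else 0) - c*(if 2\<le>m then s(m-2) else 0)
                - (if 3\<le>m then s(m-3) else 0) = t m"
  shows "Abs_fps (\<lambda>k. if even k then s (k div 2) else 0) *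
           (1 + fps_const c * fps_X^2 - fps_const c * fps_X^4 - fps_X^6)
         = Abs_fps (\<lambda>k. if even k then t (k div 2) else 0)"
proof (rule fps_ext)
  fix k
  define A where "A = Abs_fps (\<lambda>k. if even k then s (k div 2) else 0)"
  have e: "A * (1 + fps_const c * fps_X^2 - fps_const c * fps_X^4 - fps_X^6)
     = A + fps_const c * (fps_X^2 * A) - fps_const c * (fps_X^4 * A) - fps_X^6 * A"
    by (simp add: algebra_simps)
  have n: "(A * (1 + fps_const c * fps_X^2 - fps_const c * fps_X^4 - fps_X^6)) $ k
     = A $ k + c * (if k < 2 then 0 else A $ (k-2)) - c * (if k < 4 then 0 else A $ (k-4))
        - (if k < 6 then 0 else A $ (k-6))"
    unfolding e by (simp only: fps_add_nth fps_sub_nth fps_mult_left_const_nth fps_X_power_mult_nth)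
  show "(A * (1 + fps_const c * fps_X^2 - fps_const c * fps_X^4 - fps_X^6)) $ k =
        Abs_fps (\<lambda>k. if even k then t (k div 2) else 0) $ k"
  proof (cases "even k")
    case True
    then obtain m where k: "k = 2*m" by blast
    have "(k-2) = 2*(m-1)" "k-4 = 2*(m-2)" "k-6 = 2*(m-3)" using k by auto
    then have h: "(k-2) = 2*(m-1)" "k-4 = 2*(m-2)" "k-6 = 2*(m-3)" .
    have "m=0 \<or> m=1 \<or> m=2 \<or> m\<ge>3" by arith
    then show ?thesis unfolding n using assms[of m] k h by (elim disjE) (simp_all add: A_def)
  next
    case False
    then show ?thesis unfolding n by (simp add: A_def)
  qed
qed

lemma Eid:
  fixes x :: "'a::field"
  shows "(1 + fps_X) * ((1 - fps_X) * (1 - fps_const x * fps_X + fps_X ^ 2) * (1 + fps_const x * fps_X + fps_X ^ 2))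
     = 1 + fps_const (1 - x^2) * fps_X^2 - fps_const (1-x^2) * fps_X^4 - fps_X^6"
proof -
  have "fps_const (1 - x^2) = 1 - fps_const x * fps_const x"
    by (metis fps_const_sub fps_const_1_eq_1 fps_const_mult power2_eq_square)
  have g: "\<And>X C :: 'a fps. (1 + X) * ((1 - X) * (1 - C * X + X ^ 2) * (1 + C * X + X ^ 2))
     = 1 + (1 - C*C) * X^2 - (1 - C*C) * X^4 - X^6" by algebra
  show ?thesis unfolding \<open>fps_const (1 - x^2) = _\<close> by (rule g)
qed

lemma main:
  fixes x :: "'a::field_char_0"
  shows "P_e x = fps_X * (1 + fps_X) *
           Abs_fps (\<lambda>k. if even k then (chebU (k div 2) (x / 2))\<^sup>2 else 0) \<and>
         P_o x = (1 + fps_X) *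
           Abs_fps (\<lambda>k. if even k \<and> k \<ge> 2
                        then chebU (k div 2) (x / 2) * chebU (k div 2 - 1) (x / 2) else 0)"
proof -
  define u where "u n = chebU n (x/2)" for n
  have u0: "u 0 = 1" and u1: "u 1 = x" using cheb_rec(1,2)[of "x/2"] by (simp_all add: u_def)
  have u1': "u (Suc 0) = x" using u1 by simp
  have ur: "u (Suc (Suc n)) = x * u (Suc n) - u n" for n
    using cheb_rec(3)[of n "x/2"] by (simp add: u_def)
  define c where "c = 1 - x^2"
  define E :: "'a fps" where "E = 1 + fps_const c * fps_X^2 - fps_const c * fps_X^4 - fps_X^6"
  define M :: "'a fps" where "M = (1 - fps_X) * (1 - fps_const x * fps_X + fps_X ^ 2) * (1 + fps_const x * fps_X + fps_X ^ 2)"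
  have ME: "(1 + fps_X) * M = E" unfolding M_def E_def c_def by (rule Eid)
  have M0: "M $ 0 \<noteq> 0" by (simp add: M_def)
  have cancel: "R * M / M = R" for R using M0 by (simp add: fps_divide_unit inverse_mult_eq_1')
  have big: "u (Suc (Suc (Suc n)))^2 + c * u (Suc (Suc n))^2 - c * u (Suc n)^2 - u n ^2 = 0" 
     "u (Suc (Suc (Suc n))) * u (Suc (Suc n)) + c * (u (Suc (Suc n)) * u (Suc n))
        - c * (u (Suc n) * u n) - (if n = 0 then 0 else u n * u (n - 1)) = 0" for n
  proof -
    have a: "u (Suc (Suc (Suc n))) = x * (x * u (Suc n) - u n) - u (Suc n)" using ur[of "Suc n"] ur[of n] by simp
    have b: "u (Suc (Suc n)) = x * u (Suc n) - u n" by (rule ur)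
    show "u (Suc (Suc (Suc n)))^2 + c * u (Suc (Suc n))^2 - c * u (Suc n)^2 - u n ^2 = 0"
      unfolding a b c_def by algebra
    have d: "(if n = 0 then 0 else u n * u (n - 1)) = u n * (x * u n - u (Suc n))"
    proof (cases n)
      case 0 then show ?thesis by (simp add: u0 u1')
    next
      case (Suc k) then show ?thesis unfolding Suc ur[of k] by (simp add: algebra_simps)
    qed
    show "u (Suc (Suc (Suc n))) * u (Suc (Suc n)) + c * (u (Suc (Suc n)) * u (Suc n))
        - c * (u (Suc n) * u n) - (if n = 0 then 0 else u n * u (n - 1)) = 0"
      unfolding a b c_def d by algebra
  qed
  have ka: "Abs_fps (\<lambda>k. if even k then (u (k div 2))\<^sup>2 else 0) * E
     = Abs_fps (\<lambda>k. if even k then (if k div 2 \<le> 1 then 1 else 0) else 0)"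
    unfolding E_def
  proof (rule key)
    fix m
    have "m=0 \<or> m=1 \<or> m=2 \<or> (\<exists>n. m = Suc (Suc (Suc n)))" by presburger
    then show "(u m)\<^sup>2 + c * (if 1 \<le> m then (u (m - 1))\<^sup>2 else 0) - c * (if 2 \<le> m then (u (m - 2))\<^sup>2 else 0) -
          (if 3 \<le> m then (u (m - 3))\<^sup>2 else 0) = (if m \<le> 1 then 1 else 0)"
    proof (elim disjE exE)
      assume "m = 2" then show ?thesis using ur[of 0] u0 u1 by (simp add: c_def numeral_2_eq_2) (simp add: algebra_simps)
    qed (use big(1) u0 u1 u1' c_def in auto)
  qed
  have kb: "Abs_fps (\<lambda>k. if even k then (if k div 2 \<ge> 1 then u (k div 2) * u (k div 2 - 1) else 0) else 0) * E
     = Abs_fps (\<lambda>k. if even k then (if k div 2 = 1 then x else 0) else 0)"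
    unfolding E_def
  proof (rule key)
    fix m
    have "m=0 \<or> m=1 \<or> m=2 \<or> (\<exists>n. m = Suc (Suc (Suc n)))" by presburger
    then show "(if 1 \<le> m then u m * u (m - 1) else 0) + c * (if 1 \<le> m then (if 1 \<le> m - 1 then u (m - 1) * u (m - 1 - 1) else 0) else 0) - c * (if 2 \<le> m then (if 1 \<le> m - 2 then u (m - 2) * u (m - 2 - 1) else 0) else 0) -
          (if 3 \<le> m then (if 1 \<le> m - 3 then u (m - 3) * u (m - 3 - 1) else 0) else 0) = (if m = 1 then x else 0)"
    proof (elim disjE exE)
      assume "m = 2" then show ?thesis using ur[of 0] u0 u1 by (simp add: c_def numeral_2_eq_2) (simp add: algebra_simps)
    next
      fix n assume m: "m = Suc (Suc (Suc n))"
      show ?thesis using big(2)[of n] unfolding m by (cases n) auto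
    qed (use u0 u1 u1' in auto)
  qed
  have t1: "Abs_fps (\<lambda>k. if even k then (if k div 2 \<le> 1 then 1 else 0) else 0) = (1 + fps_X^2 :: 'a fps)"
  proof (rule fps_ext)
    fix k :: nat
    have "k=0 \<or> k=1 \<or> k=2 \<or> k=3 \<or> k\<ge>4" by arith
    then show "Abs_fps (\<lambda>k. if even k then (if k div 2 \<le> 1 then 1 else 0) else 0) $ k = (1 + fps_X^2 :: 'a fps) $ k"
      by (elim disjE) auto
  qed
  have t2: "Abs_fps (\<lambda>k. if even k then (if k div 2 = 1 then x else 0) else 0) = fps_const x * fps_X^2"
  proof (rule fps_ext)
    fix k :: nat
    have "k=0 \<or> k=1 \<or> k=2 \<or> k=3 \<or> k\<ge>4" by arith
    then show "Abs_fps (\<lambda>k. if even k then (if k div 2 = 1 then x else 0) else 0) $ k = (fps_const x * fps_X^2) $ k"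
      by (elim disjE) auto
  qed
  define A where "A = Abs_fps (\<lambda>k. if even k then (chebU (k div 2) (x / 2))\<^sup>2 else 0)"
  define B where "B = Abs_fps (\<lambda>k. if even k \<and> k \<ge> 2
                        then chebU (k div 2) (x / 2) * chebU (k div 2 - 1) (x / 2) else 0)"
  have AE: "A * E = 1 + fps_X^2" using ka t1 unfolding A_def u_def by simp
  have "B = Abs_fps (\<lambda>k. if even k then (if k div 2 \<ge> 1 then u (k div 2) * u (k div 2 - 1) else 0) else 0)"
    unfolding B_def u_def by (rule arg_cong[where f=Abs_fps]) (auto simp: fun_eq_iff)
  then have BE: "B * E = fps_const x * fps_X^2" using kb t2 by simp
  have "fps_X * (1 + fps_X^2) = (fps_X * (1 + fps_X) * A) * M"
    by (simp flip: AE ME add: algebra_simps)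
  then have "P_e x = (fps_X * (1 + fps_X) * A) * M / M" by (simp add: P_e_def M_def)
  then have 1: "P_e x = fps_X * (1 + fps_X) * A" using cancel by simp
  have "fps_const x * fps_X^2 = ((1 + fps_X) * B) * M"
    by (simp flip: BE ME add: algebra_simps)
  then have "P_o x = ((1 + fps_X) * B) * M / M" by (simp add: P_o_def M_def)
  then have 2: "P_o x = (1 + fps_X) * B" using cancel by simp
  show ?thesis using 1 2 unfolding A_def B_def by simp
qed

theorem lemma2p2:
  fixes x :: "'a::field_char_0"
  shows "P_e x = fps_X * (1 + fps_X) *
           Abs_fps (\<lambda>k. if even k then (chebU (k div 2) (x / 2))\<^sup>2 else 0) \<and>
         P_o x = (1 + fps_X) *
           Abs_fps (\<lambda>k. if even k \<and> k \<ge> 2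
                        then chebU (k div 2) (x / 2) * chebU (k div 2 - 1) (x / 2) else 0)"
  using main by blast

end
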